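(* Let $n\ge w\ge t\ge1$ and $q\ge1$ be integers, let $m=\binom{w}{t}$, and suppose $A=\{A_1,\dots,A_m\}$ is a partition of $Q_q^n(t)$ into $m$ sets each of which is an $A(n,q,w,t)$ design (all of them then have the same cardinality $N$). Let $GA$ be the $m$-partite hypergraph with parts $A_1,\dots,A_m$ in which a collection $\{b_1,\dots,b_m\}$ with $b_i\in A_i$ is an edge if and only if there exists $a\in Q_q^n(w)$ with $F(a)\subseteq F(b_i)$ for all $i$ (equivalently, $\{b_1,\dots,b_m\}$ is the set of all words of weight $t$ extended by $a$). Then the number of $H(n,q,w,t)$ designs equals $\operatorname{per}_m M(GA)$.
   Context: $Q_q=\{0,\dots,q-1\}$, $Q_{q*}=Q_q\cup\{*\}$. A word $u\in Q_{q*}^n$ has weight $n$ minus its number of $*$ symbols and corresponds to the face $F(u)=\{x\in Q_q^n: x_i=u_i\text{ whenever }u_i\ne *\}$ of the hypercube $Q_q^n$. $Q_q^n(t)$ denotes the set of words of weight $t$ (i.e. the $(n-t)$-faces). We say $u$ extends $v$ if $F(u)\subseteq F(v)$, i.e. $u_i=v_i$ whenever $v_i\ne*$. An $H(n,q,w,t)$ design is a set of words of weight $w$ such that every word of weight $t$ is extended by exactly one of them; an $A(n,q,w,t)$ design is a set of words of weight $t$ such that every word of weight $w$ extends exactly one of them. For an $m$-partite hypergraph with $N$ vertices in each part (each part enumerated $1,\dots,N$) whose edges contain one vertex from each part, the adjacency array $M=(a_{i_1\dots i_m})$ has $a_{i_1\dots i_m}=1$ iff vertices $i_1\in$ part 1,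 …, $i_m\in$ part $m$ form an edge, else $0$; a diagonal is an $N$-element subset of $\{1,\dots,N\}^m$ any two elements of which differ in every coordinate; and $\operatorname{per}_m M=\sum_{I}\prod_{(i_1,\dots,i_m)\in I}a_{i_1\dots i_m}$ over all diagonals $I$. *)

theory Defs
  imports "HOL-Library.FuncSet"
begin

type_synonym word = "nat \<Rightarrow> nat option"
  (* None plays the role of the symbol *; positions i >= n are None *)

definition words :: "nat \<Rightarrow> nat \<Rightarrow> word set" where
  "words n q = {u. (\<forall>i<n. \<forall>x. u i = Some x \<longrightarrow> x < q) \<and> (\<forall>i\<ge>n. u i = None)}"

definition weight :: "nat \<Rightarrow> word \<Rightarrow> nat" where
  "weight n u = card {i. i < n \<and> u i \<noteq> None}"

definition words_wt :: "nat \<Rightarrow> nat \<Rightarrow> nat \<Rightarrow> word set" where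
  "words_wt n q t = {u \<in> words n q. weight n u = t}"

definition extends :: "nat \<Rightarrow> word \<Rightarrow> word \<Rightarrow> bool" where
  "extends n u v \<longleftrightarrow> (\<forall>i<n. v i \<noteq> None \<longrightarrow> u i = v i)"

definition H_design :: "nat \<Rightarrow> nat \<Rightarrow> nat \<Rightarrow> nat \<Rightarrow> word set \<Rightarrow> bool" where
  "H_design n q w t D \<longleftrightarrow> D \<subseteq> words_wt n q w \<and>
     (\<forall>v\<in>words_wt n q t. \<exists>!u. u \<in> D \<and> extends n u v)"

definition A_design :: "nat \<Rightarrow> nat \<Rightarrow> nat \<Rightarrow> nat \<Rightarrow> word set \<Rightarrow> bool" where
  "A_design n q w t D \<longleftrightarrow> D \<subseteq> words_wt n q t \<and>
     (\<forall>u\<in>words_wt n q w. \<exists>!v. v \<in> D \<and> extends n u v)"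

(* diagonals of an m-dimensional array of order N: index tuples are functions
   {0..<m} \<rightarrow> {1..N} (extensional) *)
definition diagonals :: "nat \<Rightarrow> nat \<Rightarrow> (nat \<Rightarrow> nat) set set" where
  "diagonals m N = {I. I \<subseteq> ({..<m} \<rightarrow>\<^sub>E {1..N}) \<and> card I = N \<and>
      (\<forall>x\<in>I. \<forall>y\<in>I. x \<noteq> y \<longrightarrow> (\<forall>k<m. x k \<noteq> y k))}"

definition per :: "nat \<Rightarrow> nat \<Rightarrow> ((nat \<Rightarrow> nat) \<Rightarrow> nat) \<Rightarrow> nat" where
  "per m N a = (\<Sum>I\<in>diagonals m N. \<Prod>x\<in>I. a x)"

(* adjacency array of the hypergraph GA, parts A 0 .. A (m-1) enumerated by enum i : {1..N} -> A i *)
definition adj_GA :: "nat \<Rightarrow> nat \<Rightarrow> nat \<Rightarrow> nat \<Rightarrow> (nat \<Rightarrow> nat \<Rightarrow> word) \<Rightarrow> (nat \<Rightarrow> nat) \<Rightarrow> nat" where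
  "adj_GA n q w m enum x = (if \<exists>a\<in>words_wt n q w. \<forall>i<m. extends n a (enum i (x i)) then 1 else 0)"

end

theory Submission
  imports Defs
begin

lemma subword_exists:
  assumes a: "a \<in> words_wt n q w" and p: "p < n" "a p \<noteq> None" and t: "1 \<le> t" "t \<le> w"
  shows "\<exists>v\<in>words_wt n q t. extends n a v \<and> v p \<noteq> None"
proof -
  let ?S = "{i. i < n \<and> a i \<noteq> None}"
  have fin: "finite ?S" by simp
  have cS: "card ?S = w" using a by (simp add: words_wt_def weight_def)
  have pS: "p \<in> ?S" using p by simp
  have "t - 1 \<le> card (?S - {p})" using cS pS fin t by (simp add: card_Diff_singleton)
  then obtain S' where S': "S' \<subseteq> ?S - {p}" "card S' = t - 1" "finite S'"
    by (rule obtain_subset_with_card_n)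
  define S where "S = insert p S'"
  have "p \<notin> S'" using S' by blast
  hence cardS: "card S = t" using S' t by (simp add: S_def)
  have SS: "S \<subseteq> ?S" using S' pS by (auto simp: S_def)
  define v where "v = (\<lambda>i. if i \<in> S then a i else None)"
  have vw: "v \<in> words n q" using a SS unfolding v_def words_wt_def words_def by auto
  have "{i. i < n \<and> v i \<noteq> None} = S" using SS unfolding v_def by auto
  hence "weight n v = t" using cardS by (simp add: weight_def)
  hence "v \<in> words_wt n q t" using vw by (simp add: words_wt_def)
  moreover have "extends n a v" by (auto simp: extends_def v_def split: if_splits)
  moreover have "v p \<noteq> None" using p by (simp add: v_def S_def)
  ultimately show ?thesis by blast
qed

lemma eq_if_extends_all:
  assumes a: "a \<in> words_wt n q w" and a': "a' \<in> words_wt n q w" and t: "1 \<le> t" "t \<le> w"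
    and H: "\<forall>v\<in>words_wt n q t. extends n a v \<longrightarrow> extends n a' v"
  shows "a = a'"
proof -
  have agree: "a' p = a p" if pp: "p < n" "a p \<noteq> None" for p
  proof -
    obtain v where v: "v \<in> words_wt n q t" "extends n a v" "v p \<noteq> None"
      using subword_exists[OF a pp t] by blast
    have "extends n a' v" using H v by blast
    thus ?thesis using v pp by (simp add: extends_def)
  qed
  let ?S = "{i. i < n \<and> a i \<noteq> None}" and ?S' = "{i. i < n \<and> a' i \<noteq> None}"
  have sub: "?S \<subseteq> ?S'" using agree by force
  have "card ?S = card ?S'" using a a' by (simp add: words_wt_def weight_def)
  hence eqS: "?S = ?S'" using sub by (intro card_subset_eq) auto
  show ?thesis
  proof
    fix i
    show "a i = a' i"
    proof (cases "i < n")
      case False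
      thus ?thesis using a a' by (simp add: words_wt_def words_def)
    next
      case True
      show ?thesis
      proof (cases "a i = None")
        case True
        hence "i \<notin> ?S'" using eqS \<open>i < n\<close> by blast
        thus ?thesis using True \<open>i < n\<close> by simp
      next
        case False thus ?thesis using agree \<open>i < n\<close> by simp
      qed
    qed
  qed
qed

lemma prod01:
  assumes "finite I" "\<forall>x\<in>I. f x = 0 \<or> f x = (1::nat)"
  shows "prod f I = (if \<forall>x\<in>I. f x = 1 then 1 else 0)"
  using assms by (auto intro: prod.neutral)

theorem proposition7:
  fixes n q w t m N :: nat
    and A :: "nat \<Rightarrow> word set"
    and enum :: "nat \<Rightarrow> nat \<Rightarrow> word"
  assumes "1 \<le> t" and "t \<le> w" and "w \<le> n" and "1 \<le> q"
    and "m = w choose t"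
    and "\<forall>i<m. A_design n q w t (A i)"
    and "\<forall>i<m. \<forall>j<m. i \<noteq> j \<longrightarrow> A i \<inter> A j = {}"
    and "(\<Union>i<m. A i) = words_wt n q t"
    and "\<forall>i<m. bij_betw (enum i) {1..N} (A i)"
  shows "card {D. H_design n q w t D} = per m N (adj_GA n q w m enum)"
proof -
  note t = assms(1,2)
  let ?W = "words_wt n q w" and ?T = "words_wt n q t"
  let ?adj = "adj_GA n q w m enum"
  have mpos: "0 < m" using assms(2,5) by simp
  have Ades: "\<And>i. i < m \<Longrightarrow> A_design n q w t (A i)" using assms(6) by blast
  have AT: "\<And>i. i < m \<Longrightarrow> A i \<subseteq> ?T" using Ades by (simp add: A_design_def)
  have bij: "\<And>i. i < m \<Longrightarrow> bij_betw (enum i) {1..N} (A i)" using assms(9) by blast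
  define V where "V i a = (THE v. v \<in> A i \<and> extends n a v)" for i a
  have ex1: "\<And>i a. i < m \<Longrightarrow> a \<in> ?W \<Longrightarrow> \<exists>!v. v \<in> A i \<and> extends n a v"
    using Ades by (simp add: A_design_def)
  have V: "V i a \<in> A i \<and> extends n a (V i a)" if "i < m" "a \<in> ?W" for i a
    unfolding V_def by (rule theI'[OF ex1[OF that]])
  have Vuniq: "V i a = v" if "i < m" "a \<in> ?W" "v \<in> A i" "extends n a v" for i a v
    unfolding V_def using that by (intro the1_equality ex1) auto
  define X where "X a = (\<lambda>i. if i < m then inv_into {1..N} (enum i) (V i a) else undefined)" for a
  have Xenum: "\<And>i a. i < m \<Longrightarrow> a \<in> ?W \<Longrightarrow> enum i (X a i) = V i a"
    unfolding X_def using V bij by (auto intro: f_inv_into_f simp: bij_betw_def)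
  have Xrange: "X a i \<in> {1..N}" if "i < m" "a \<in> ?W" for i a
  proof -
    have "V i a \<in> enum i ` {1..N}" using V[OF that] bij[OF that(1)] by (simp add: bij_betw_def)
    hence "inv_into {1..N} (enum i) (V i a) \<in> {1..N}" by (rule inv_into_into)
    thus ?thesis using that by (simp add: X_def)
  qed
  have XPi: "\<And>a. a \<in> ?W \<Longrightarrow> X a \<in> {..<m} \<rightarrow>\<^sub>E {1..N}"
    using Xrange by (auto simp: PiE_iff extensional_def X_def)
  have cover: "\<And>v. v \<in> ?T \<Longrightarrow> \<exists>i<m. v \<in> A i" using assms(8) by blast
  have Xinj: "inj_on X ?W"
  proof
    fix a a' assume a: "a \<in> ?W" and a': "a' \<in> ?W" and eq: "X a = X a'"
    show "a = a'"
    proof (rule eq_if_extends_all[OF a a' t], intro ballI impI)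
      fix v assume v: "v \<in> ?T" "extends n a v"
      then obtain i where i: "i < m" "v \<in> A i" using cover by blast
      have "V i a = v" using Vuniq[OF i(1) a i(2) v(2)] .
      moreover have "V i a = V i a'" using Xenum[OF i(1) a] Xenum[OF i(1) a'] eq by metis
      ultimately show "extends n a' v" using V[OF i(1) a'] by simp
    qed
  qed
  define G where "G = {I \<in> diagonals m N. \<forall>x\<in>I. ?adj x = 1}"
  have finPi: "finite ({..<m} \<rightarrow>\<^sub>E {1..N})" by (rule finite_PiE) auto
  have findiag: "finite (diagonals m N)"
    by (rule finite_subset[of _ "Pow ({..<m} \<rightarrow>\<^sub>E {1..N})"]) (auto simp: diagonals_def intro: finPi simp del: One_nat_def)
  have perG: "per m N ?adj = card G"
  proof -
    have "per m N ?adj = (\<Sum>I\<in>diagonals m N. if \<forall>x\<in>I. ?adj x = 1 then 1 else 0)"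
      unfolding per_def
    proof (rule sum.cong[OF refl])
      fix I assume "I \<in> diagonals m N"
      hence "finite I" using finPi by (auto simp: diagonals_def intro: finite_subset)
      thus "(\<Prod>x\<in>I. ?adj x) = (if \<forall>x\<in>I. ?adj x = 1 then 1 else 0)"
        by (intro prod01) (auto simp: adj_GA_def)
    qed
    also have "\<dots> = card G"
      using findiag by (simp add: G_def sum.inter_filter[symmetric])
    finally show ?thesis .
  qed
  have "bij_betw (\<lambda>D. X ` D) {D. H_design n q w t D} G"
    unfolding bij_betw_def
  proof (intro conjI)
    show "inj_on (\<lambda>D. X ` D) {D. H_design n q w t D}"
    proof
      fix D D' assume "D \<in> {D. H_design n q w t D}" "D' \<in> {D. H_design n q w t D}" "X ` D = X ` D'"
      thus "D = D'" using inj_on_image_eq_iff[OF Xinj] by (auto simp: H_design_def)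
    qed
    show "(\<lambda>D. X ` D) ` {D. H_design n q w t D} = G"
    proof
      show "(\<lambda>D. X ` D) ` {D. H_design n q w t D} \<subseteq> G"
      proof clarify
        fix D assume H: "H_design n q w t D"
        have DW: "D \<subseteq> ?W" using H by (simp add: H_design_def)
        have Hu: "\<And>v. v \<in> ?T \<Longrightarrow> \<exists>!u. u \<in> D \<and> extends n u v" using H by (simp add: H_design_def)
        have Huq: "a = a'" if "v \<in> ?T" "a \<in> D" "a' \<in> D" "extends n a v" "extends n a' v" for v a a'
        proof -
          have "\<exists>!u. u \<in> D \<and> extends n u v" using Hu that(1) .
          thus ?thesis using that(2-5) by (auto simp: Ex1_def)
        qed
        have "bij_betw (V 0) D (A 0)"
          unfolding bij_betw_def
        proof
          show "inj_on (V 0) D"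
          proof
            fix a a' assume a: "a \<in> D" and a': "a' \<in> D" and e: "V 0 a = V 0 a'"
            have "V 0 a \<in> ?T" using V[OF mpos] AT[OF mpos] a DW by blast
            moreover have "extends n a (V 0 a)" "extends n a' (V 0 a)"
              using V[OF mpos, of a] V[OF mpos, of a'] a a' DW e by auto
            ultimately show "a = a'" using Huq a a' by blast
          qed
          show "V 0 ` D = A 0"
          proof
            show "V 0 ` D \<subseteq> A 0" using V[OF mpos] DW by auto
            show "A 0 \<subseteq> V 0 ` D"
            proof
              fix v assume v: "v \<in> A 0"
              have "v \<in> ?T" using v AT[OF mpos] by blast
              then obtain a where a: "a \<in> D" "extends n a v" using Hu by (auto simp: Ex1_def)
              have "V 0 a = v" using Vuniq[OF mpos _ v a(2)] a(1) DW by blast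
              thus "v \<in> V 0 ` D" using a(1) by blast
            qed
          qed
        qed
        hence "card D = card (A 0)" by (rule bij_betw_same_card)
        also have "\<dots> = N" using bij_betw_same_card[OF bij[OF mpos]] by simp
        finally have cD: "card D = N" .
        have "X ` D \<in> diagonals m N"
          unfolding diagonals_def
        proof (intro CollectI conjI)
          show "X ` D \<subseteq> {..<m} \<rightarrow>\<^sub>E {1..N}" using XPi DW by blast
          show "card (X ` D) = N" using card_image[OF inj_on_subset[OF Xinj DW]] cD by simp
          show "\<forall>x\<in>X ` D. \<forall>y\<in>X ` D. x \<noteq> y \<longrightarrow> (\<forall>k<m. x k \<noteq> y k)"
          proof (clarify)
            fix a a' k assume a: "a \<in> D" and a': "a' \<in> D" and ne: "X a \<noteq> X a'"
              and k: "k < m" and e: "X a k = X a' k"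
            have e2: "V k a = V k a'" proof -
              have "a \<in> ?W" "a' \<in> ?W" using a a' DW by blast+
              thus ?thesis using Xenum[OF k, of a] Xenum[OF k, of a'] e by metis
            qed
            have "V k a \<in> ?T" using V[OF k] AT[OF k] a DW by blast
            moreover have "extends n a (V k a)" "extends n a' (V k a)"
              using V[OF k, of a] V[OF k, of a'] a a' DW e2 by auto
            ultimately have "a = a'" using Huq a a' by blast
            thus False using ne by simp
          qed
        qed
        moreover have "\<forall>x\<in>X ` D. ?adj x = 1"
        proof
          fix x assume "x \<in> X ` D"
          then obtain a where a: "a \<in> D" "x = X a" by blast
          have aW: "a \<in> ?W" using a DW by blast
          have "\<forall>i<m. extends n a (enum i (x i))"
          proof (intro allI impI)
            fix i assume i: "i < m"
            show "extends n a (enum i (x i))" using Xenum[OF i aW] V[OF i aW] a(2) by simp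
          qed
          thus "?adj x = 1" using aW unfolding adj_GA_def by auto
        qed
        ultimately show "X ` D \<in> G" by (simp add: G_def)
      qed
      show "G \<subseteq> (\<lambda>D. X ` D) ` {D. H_design n q w t D}"
      proof
        fix I assume IG: "I \<in> G"
        have IPi: "I \<subseteq> {..<m} \<rightarrow>\<^sub>E {1..N}" and cI: "card I = N"
          and diag: "\<And>x y k. x \<in> I \<Longrightarrow> y \<in> I \<Longrightarrow> x \<noteq> y \<Longrightarrow> k < m \<Longrightarrow> x k \<noteq> y k"
          using IG by (auto simp: G_def diagonals_def)
        have finI: "finite I" using IPi finPi by (rule finite_subset)
        define D where "D = {a \<in> ?W. X a \<in> I}"
        have preim: "\<exists>a\<in>?W. X a = x" if x: "x \<in> I" for x
        proof -
          have "?adj x = 1" using IG x by (simp add: G_def)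
          then obtain a where a: "a \<in> ?W" "\<forall>i<m. extends n a (enum i (x i))"
            unfolding adj_GA_def by (auto split: if_splits)
          have "X a = x"
          proof
            fix i show "X a i = x i"
            proof (cases "i < m")
              case True
              have xi: "x i \<in> {1..N}" using IPi x True by (auto simp del: One_nat_def simp: PiE_iff)
              have "enum i (x i) \<in> A i" using bij[OF True] xi by (auto simp: bij_betw_def)
              hence "V i a = enum i (x i)" using Vuniq[OF True a(1)] a(2) True by blast
              thus ?thesis using True xi bij[OF True]
                by (simp add: X_def bij_betw_def inv_into_f_f)
            next
              case False
              thus ?thesis using IPi x by (auto simp: X_def PiE_iff extensional_def)
            qed
          qed
          thus ?thesis using a by blast
        qed
        have XD: "X ` D = I"
        proof
          show "X ` D \<subseteq> I" by (auto simp: D_def)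
          show "I \<subseteq> X ` D"
          proof
            fix x assume x: "x \<in> I"
            then obtain a where "a \<in> ?W" "X a = x" using preim by blast
            thus "x \<in> X ` D" using x unfolding D_def by blast
          qed
        qed
        have "H_design n q w t D"
          unfolding H_design_def
        proof (intro conjI ballI)
          show "D \<subseteq> ?W" by (auto simp: D_def)
          fix v assume v: "v \<in> ?T"
          then obtain j where j: "j < m" "v \<in> A j" using cover by blast
          have "v \<in> enum j ` {1..N}" using bij[OF j(1)] j(2) by (simp add: bij_betw_def)
          then obtain k where k: "k \<in> {1..N}" "enum j k = v" by blast
          have injj: "inj_on (\<lambda>x. x j) I" by (rule inj_onI) (use diag j(1) in blast)
          have "(\<lambda>x. x j) ` I \<subseteq> {1..N}" using IPi j(1) by auto
          moreover have "card ((\<lambda>x. x j) ` I) = card {1..N}" using card_image[OF injj] cI by simp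
          ultimately have "(\<lambda>x. x j) ` I = {1..N}" by (metis card_subset_eq finite_atLeastAtMost)
          hence "k \<in> (\<lambda>x. x j) ` I" using k(1) by simp
          then obtain x where x: "x \<in> I" "x j = k" by (auto simp del: One_nat_def)
          obtain a where a: "a \<in> ?W" "X a = x" using preim[OF x(1)] by blast
          have "V j a = v" using Xenum[OF j(1) a(1)] a(2) x(2) k(2) by simp
          hence ext: "extends n a v" using V[OF j(1) a(1)] by simp
          show "\<exists>!u. u \<in> D \<and> extends n u v"
          proof
            show "a \<in> D \<and> extends n a v" using a x ext by (simp add: D_def)
            fix u assume u: "u \<in> D \<and> extends n u v"
            have uW: "u \<in> ?W" "X u \<in> I" using u by (auto simp: D_def)
            have "V j u = v" using Vuniq[OF j(1) uW(1) j(2)] u by blast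
            moreover have "V j a = v" using Vuniq[OF j(1) a(1) j(2) ext] .
            ultimately have "X u j = X a j" by (simp add: X_def j(1))
            hence "X u = X a" using diag[OF uW(2), of "X a" j] a(2) x(1) j(1) by blast
            thus "u = a" using inj_onD[OF Xinj _ uW(1) a(1)] by blast
          qed
        qed
        thus "I \<in> (\<lambda>D. X ` D) ` {D. H_design n q w t D}" using XD by blast
      qed
    qed
  qed
  hence "card {D. H_design n q w t D} = card G" by (rule bij_betw_same_card)
  thus ?thesis using perG by simp
qed

end
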